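(* Let $\pi$ be a pyramid and $A$ a $\pi$-tableau with entries in an algebraically closed field $\Bbbk$ of characteristic zero. Then $\lambda_A-\tilde\rho$ is the weight of a one-dimensional $U(\mathfrak h)$-module (i.e. there is a one-dimensional $\mathfrak h$-module on which $\mathfrak t\subseteq\mathfrak h$ acts by $\lambda_A-\tilde\rho$) if and only if $A$ is column-connected.
   Context: Pyramid: integers $p_1\le\dots\le p_{m+n}$ with $\sum p_i=M+N$; rows $1,\dots,m+n$ top to bottom, row $i$ has $p_i$ consecutive boxes, each box not in the bottom row lies directly above a box of the row beneath; the bottom row has $\ell=p_{m+n}$ boxes; columns $1,\dots,\ell$. Rows are labelled "$+$" ($m$ rows, $M$ boxes in total) or "$-$" ($n$ rows, $N$ boxes); "$+$" boxes are numbered $1,\dots,M$ and "$-$" boxes $\bar1,\dots,\bar N$ down columns left to right; $I=\{1<\dots<M<\bar1<\dots<\bar N\}$; $\mathrm p(i)=0$ for $i\le M$, $1$ otherwise; $\mathrm{row}(i),\mathrm{col}(i)$ the row and column of box $i$. $\check q_c$ = number of "$+$" boxes minus number of "$-$" boxes in column $c$; $\check{\mathrm{row}}(i)$ = number of "$+$"-rows minus number of "$-$"-rows among rows $1,\dots,\mathrm{row}(i)$; $h=m-n$. $\mathfrak g=\mathfrak{gl}_{M|N}(\Bbbk)$ with elementary matrices $e_{i,j}$ of parity $\mathrm p(i)+\mathrm p(j)$, $\mathfrak t$ the diagonal matrices with dual basis $\varepsilon_i$, and $\mathfrak h=\mathrm{span}\{e_{i,j}:\mathrm{col}(i)=\mathrm{col}(j)\}$.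 $\tilde\rho=\sum_{i\in I}(-1)^{\mathrm p(i)}\big(h-\check{\mathrm{row}}(i)-(\check q_{\mathrm{col}(i)}+\dots+\check q_\ell)\big)\varepsilon_i$. A $\pi$-tableau $A$ fills the boxes with elements $a_i\in\Bbbk$ ($i\in I$), and $\lambda_A=\sum_{i\in I}a_i\varepsilon_i$. $A$ is column-connected if whenever box $j$ lies directly below box $i$: $a_i=a_j+1$ if $\mathrm p(i)=\mathrm p(j)$, and $a_i+a_j=-1$ if $\mathrm p(i)\ne\mathrm p(j)$. *)

theory Defs
  imports "HOL-Computational_Algebra.Polynomial"
begin

definition alg_closed :: "'k::field itself \<Rightarrow> bool" where
  "alg_closed _ \<longleftrightarrow> (\<forall>q :: 'k poly. 0 < degree q \<longrightarrow> (\<exists>x. poly q x = 0))"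

text \<open>A pyramid with rows 1..R (top to bottom). Row r has length len r and occupies
  columns off r + 1 .. off r + len r; sg r = True means the row is labelled "+".
  The bottom row R occupies columns 1 .. ell.\<close>
definition pyramid :: "nat \<Rightarrow> (nat \<Rightarrow> nat) \<Rightarrow> (nat \<Rightarrow> nat) \<Rightarrow> (nat \<Rightarrow> bool) \<Rightarrow> bool" where
  "pyramid R len off sg \<longleftrightarrow> 1 \<le> R \<and> off R = 0 \<and>
     (\<forall>r\<in>{1..R}. 1 \<le> len r) \<and>
     (\<forall>r\<in>{1..<R}. len r \<le> len (Suc r) \<and> off (Suc r) \<le> off r \<and>
                   off r + len r \<le> off (Suc r) + len (Suc r))"

definition boxes :: "nat \<Rightarrow> (nat \<Rightarrow> nat) \<Rightarrow> (nat \<Rightarrow> nat) \<Rightarrow> (nat \<times> nat) set" where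
  "boxes R len off = {(r, c). 1 \<le> r \<and> r \<le> R \<and> off r < c \<and> c \<le> off r + len r}"

definition sgn_row :: "(nat \<Rightarrow> bool) \<Rightarrow> nat \<Rightarrow> int" where
  "sgn_row sg r = (if sg r then 1 else -1)"

definition par :: "(nat \<Rightarrow> bool) \<Rightarrow> nat \<times> nat \<Rightarrow> nat" where
  "par sg b = (if sg (fst b) then 0 else 1)"

definition hh :: "nat \<Rightarrow> (nat \<Rightarrow> bool) \<Rightarrow> int" where
  "hh R sg = (\<Sum>r\<in>{1..R}. sgn_row sg r)"

definition rowc :: "(nat \<Rightarrow> bool) \<Rightarrow> nat \<Rightarrow> int" where
  "rowc sg r = (\<Sum>r'\<in>{1..r}. sgn_row sg r')"

definition qc :: "nat \<Rightarrow> (nat \<Rightarrow> nat) \<Rightarrow> (nat \<Rightarrow> nat) \<Rightarrow> (nat \<Rightarrow> bool) \<Rightarrow> nat \<Rightarrow> int" where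
  "qc R len off sg c = (\<Sum>b\<in>{b \<in> boxes R len off. snd b = c}. sgn_row sg (fst b))"

definition rho_tilde :: "nat \<Rightarrow> (nat \<Rightarrow> nat) \<Rightarrow> (nat \<Rightarrow> nat) \<Rightarrow> (nat \<Rightarrow> bool) \<Rightarrow> nat \<times> nat \<Rightarrow> int" where
  "rho_tilde R len off sg b =
     sgn_row sg (fst b) * (hh R sg - rowc sg (fst b) - (\<Sum>c\<in>{snd b..len R}. qc R len off sg c))"

definition column_connected ::
  "nat \<Rightarrow> (nat \<Rightarrow> nat) \<Rightarrow> (nat \<Rightarrow> nat) \<Rightarrow> (nat \<Rightarrow> bool) \<Rightarrow> (nat \<times> nat \<Rightarrow> 'k::field) \<Rightarrow> bool" where
  "column_connected R len off sg A \<longleftrightarrow>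
     (\<forall>r c. (r, c) \<in> boxes R len off \<longrightarrow> (Suc r, c) \<in> boxes R len off \<longrightarrow>
        (if sg r = sg (Suc r) then A (r, c) = A (Suc r, c) + 1
         else A (r, c) + A (Suc r, c) = -1))"

text \<open>Matrices in gl_{M|N}, with rows/columns indexed by the boxes (a relabelling of I).\<close>
type_synonym 'k mat = "nat \<times> nat \<Rightarrow> nat \<times> nat \<Rightarrow> 'k"

definition mat_mult :: "(nat \<times> nat) set \<Rightarrow> 'k::field mat \<Rightarrow> 'k mat \<Rightarrow> 'k mat" where
  "mat_mult B X Y = (\<lambda>i j. \<Sum>d\<in>B. X i d * Y d j)"

definition sbracket :: "(nat \<times> nat) set \<Rightarrow> 'k::field mat \<Rightarrow> nat \<Rightarrow> 'k mat \<Rightarrow> nat \<Rightarrow> 'k mat" where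
  "sbracket B X x Y y = (\<lambda>i j. mat_mult B X Y i j - (-1) ^ (x * y) * mat_mult B Y X i j)"

definition in_h :: "nat \<Rightarrow> (nat \<Rightarrow> nat) \<Rightarrow> (nat \<Rightarrow> nat) \<Rightarrow> 'k::field mat \<Rightarrow> bool" where
  "in_h R len off X \<longleftrightarrow> (\<forall>i j. X i j \<noteq> 0 \<longrightarrow>
      i \<in> boxes R len off \<and> j \<in> boxes R len off \<and> snd i = snd j)"

definition homog :: "(nat \<Rightarrow> bool) \<Rightarrow> 'k::field mat \<Rightarrow> nat \<Rightarrow> bool" where
  "homog sg X x \<longleftrightarrow> x \<in> {0, 1} \<and>
     (\<forall>i j. X i j \<noteq> 0 \<longrightarrow> (par sg i + par sg j) mod 2 = x)"

text \<open>A one-dimensional h-module: h acts on the one-dimensional super space by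
  the scalars chi X.  The action is linear, odd elements act by odd endomorphisms
  (necessarily zero on a one-dimensional space), and the action respects the
  supercommutator.\<close>
definition one_dim_module ::
  "nat \<Rightarrow> (nat \<Rightarrow> nat) \<Rightarrow> (nat \<Rightarrow> nat) \<Rightarrow> (nat \<Rightarrow> bool) \<Rightarrow> ('k::field mat \<Rightarrow> 'k) \<Rightarrow> bool" where
  "one_dim_module R len off sg chi \<longleftrightarrow>
     (\<forall>X Y. in_h R len off X \<longrightarrow> in_h R len off Y \<longrightarrow> chi (\<lambda>i j. X i j + Y i j) = chi X + chi Y) \<and>
     (\<forall>a X. in_h R len off X \<longrightarrow> chi (\<lambda>i j. a * X i j) = a * chi X) \<and>
     (\<forall>X. in_h R len off X \<longrightarrow> homog sg X 1 \<longrightarrow> chi X = 0) \<and>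
     (\<forall>X x Y y. in_h R len off X \<longrightarrow> in_h R len off Y \<longrightarrow> homog sg X x \<longrightarrow> homog sg Y y \<longrightarrow>
        chi (sbracket (boxes R len off) X x Y y) = chi X * chi Y - (-1) ^ (x * y) * chi Y * chi X)"

text \<open>t (diagonal matrices, contained in h) acts by the weight mu = sum_b mu b epsilon_b\<close>
definition has_weight ::
  "nat \<Rightarrow> (nat \<Rightarrow> nat) \<Rightarrow> (nat \<Rightarrow> nat) \<Rightarrow> ('k::field mat \<Rightarrow> 'k) \<Rightarrow> (nat \<times> nat \<Rightarrow> 'k) \<Rightarrow> bool" where
  "has_weight R len off chi mu \<longleftrightarrow>
     (\<forall>D. (\<forall>i j. D i j \<noteq> 0 \<longrightarrow> i = j \<and> i \<in> boxes R len off) \<longrightarrow>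
        chi D = (\<Sum>b\<in>boxes R len off. mu b * D b b))"

end

theory Submission
  imports Defs
begin

definition EE :: "nat \<times> nat \<Rightarrow> nat \<times> nat \<Rightarrow> 'k::field mat" where
  "EE i j = (\<lambda>a b. if a = i \<and> b = j then 1 else 0)"

lemma finite_boxes: "finite (boxes R len off)"
proof -
  have "boxes R len off \<subseteq> (SIGMA r:{1..R}. {off r<..off r + len r})"
    by (auto simp: boxes_def)
  thus ?thesis by (rule finite_subset) auto
qed

lemma mm_EE:
  assumes "j \<in> B" "finite B"
  shows "mat_mult B (EE i j) (EE j k) = (EE i k :: 'k::field mat)"
proof (intro ext)
  fix a b
  have "mat_mult B (EE i j :: 'k mat) (EE j k) a b = (\<Sum>d\<in>B. if d = j then (if a = i \<and> b = k then 1 else 0) else (0::'k))"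
    unfolding mat_mult_def EE_def by (rule sum.cong) auto
  also have "\<dots> = EE i k a b" using assms by (simp add: EE_def)
  finally show "mat_mult B (EE i j) (EE j k) a b = (EE i k :: 'k mat) a b" .
qed

lemma contig:
  assumes p: "pyramid R len off sg" and b: "(r, c) \<in> boxes R len off"
    and k: "r \<le> k" "k \<le> R"
  shows "(k, c) \<in> boxes R len off"
  using k
proof (induction k rule: dec_induct)
  case base then show ?case using b by simp
next
  case (step n)
  then have "n \<in> {1..<R}" using b by (auto simp: boxes_def)
  then have "off (Suc n) \<le> off n \<and> off n + len n \<le> off (Suc n) + len (Suc n)"
    using p unfolding pyramid_def by blast
  then show ?case using step by (auto simp: boxes_def)
qed

lemma col_const:
  assumes p: "pyramid R len off sg"
    and adj: "\<And>r c. (r, c) \<in> boxes R len off \<Longrightarrow> (Suc r, c) \<in> boxes R len off \<Longrightarrow> f (r, c) = f (Suc r, c)"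
    and b: "(r, c) \<in> boxes R len off" and le: "r \<le> r'" and b': "(r', c) \<in> boxes R len off"
  shows "f (r, c) = f (r', c)"
  using le b'
proof (induction r' rule: dec_induct)
  case base then show ?case by simp
next
  case (step n)
  have nR: "n \<le> R" using step by (auto simp: boxes_def)
  have bn: "(n, c) \<in> boxes R len off" using contig[OF p b step(1) nR] .
  then show ?case using step adj[OF bn step(4)] by simp
qed

lemma col_const2:
  assumes p: "pyramid R len off sg"
    and adj: "\<And>r c. (r, c) \<in> boxes R len off \<Longrightarrow> (Suc r, c) \<in> boxes R len off \<Longrightarrow> f (r, c) = f (Suc r, c)"
    and b: "b \<in> boxes R len off" and d: "d \<in> boxes R len off" and s: "snd b = snd d"
  shows "f b = f d"
proof -
  obtain r c where bb: "b = (r, c)" by (cases b)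
  obtain r' c' where dd: "d = (r', c')" by (cases d)
  have cc: "c' = c" using s bb dd by simp
  show ?thesis
  proof (cases "r \<le> r'")
    case True then show ?thesis using col_const[OF p adj, of r c r'] b d bb dd cc by simp
  next
    case False then show ?thesis using col_const[OF p adj, of r' c r] b d bb dd cc by simp
  qed
qed

lemma rho_adj:
  assumes "1 \<le> r"
  shows "sg r = sg (Suc r) \<Longrightarrow> rho_tilde R len off sg (r, c) = rho_tilde R len off sg (Suc r, c) + 1"
    and "sg r \<noteq> sg (Suc r) \<Longrightarrow> rho_tilde R len off sg (r, c) + rho_tilde R len off sg (Suc r, c) = -1"
  using assms by (auto simp: rho_tilde_def rowc_def sgn_row_def algebra_simps)

theorem mainTheorem6:
  fixes R :: nat and len off :: "nat \<Rightarrow> nat" and sg :: "nat \<Rightarrow> bool"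
    and A :: "nat \<times> nat \<Rightarrow> 'k::field_char_0"
  assumes "alg_closed TYPE('k)"
    and p: "pyramid R len off sg"
  shows "(\<exists>chi. one_dim_module R len off sg chi \<and>
            has_weight R len off chi (\<lambda>b. A b - of_int (rho_tilde R len off sg b)))
         \<longleftrightarrow> column_connected R len off sg A"
proof -
  define B where "B = boxes R len off"
  define mu where "mu = (\<lambda>b. A b - of_int (rho_tilde R len off sg b))"
  have finB: "finite B" unfolding B_def by (rule finite_boxes)
  have inhE: "in_h R len off (EE i j :: 'k mat)" if "i \<in> B" "j \<in> B" "snd i = snd j" for i j
    using that unfolding in_h_def EE_def B_def by auto
  have homE: "homog sg (EE i j :: 'k mat) ((par sg i + par sg j) mod 2)" for i j
    unfolding homog_def EE_def by auto
  have wD: "chi (\<lambda>a b. EE i i a b + t * EE j j a b) = mu i + t * mu j"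
    if hw: "has_weight R len off chi mu" and ij: "i \<in> B" "j \<in> B" "i \<noteq> j" for chi :: "'k mat \<Rightarrow> 'k" and i j t
  proof -
    have "chi (\<lambda>a b. EE i i a b + t * EE j j a b) = (\<Sum>b\<in>B. mu b * (EE i i b b + t * EE j j b b))"
      using hw ij unfolding B_def has_weight_def
      by (intro mp[OF spec[of _ "\<lambda>a b. EE i i a b + t * EE j j a b", OF hw[unfolded has_weight_def]]])
         (auto simp: EE_def B_def split: if_splits)
    also have "\<dots> = (\<Sum>b\<in>B. (if b = i then mu i else 0) + (if b = j then t * mu j else 0))"
      by (rule sum.cong) (auto simp: EE_def ij)
    also have "\<dots> = mu i + t * mu j" using finB ij by (simp add: sum.distrib)
    finally show ?thesis .
  qed
  show ?thesis
  proof
    assume "\<exists>chi. one_dim_module R len off sg chi \<and> has_weight R len off chi (\<lambda>b. A b - of_int (rho_tilde R len off sg b))"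
    then obtain chi where od: "one_dim_module R len off sg chi" and hw: "has_weight R len off chi mu"
      unfolding mu_def by blast
    show "column_connected R len off sg A"
      unfolding column_connected_def
    proof (intro allI impI)
      fix r c
      assume bi: "(r, c) \<in> boxes R len off" and bj: "(Suc r, c) \<in> boxes R len off"
      define i where "i = (r, c)"
      define j where "j = (Suc r, c)"
      have iB: "i \<in> B" and jB: "j \<in> B" using bi bj by (auto simp: i_def j_def B_def)
      have ij: "i \<noteq> j" by (simp add: i_def j_def)
      have r1: "1 \<le> r" using bi by (simp add: boxes_def)
      have scol: "snd i = snd j" "snd j = snd i" by (auto simp: i_def j_def)
      have mm1: "mat_mult B (EE i j) (EE j i) = (EE i i :: 'k mat)" by (rule mm_EE[OF jB finB])
      have mm2: "mat_mult B (EE j i) (EE i j) = (EE j j :: 'k mat)" by (rule mm_EE[OF iB finB])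
      have X: "in_h R len off (EE i j :: 'k mat)" "in_h R len off (EE j i :: 'k mat)"
        using inhE iB jB scol by auto
      show "if sg r = sg (Suc r) then A (r, c) = A (Suc r, c) + 1
            else A (r, c) + A (Suc r, c) = - 1"
      proof (cases "sg r = sg (Suc r)")
        case True
        have pp: "(par sg i + par sg j) mod 2 = 0" "(par sg j + par sg i) mod 2 = 0"
          using True by (auto simp: par_def i_def j_def)
        have br: "chi (sbracket B (EE i j) 0 (EE j i) 0) = 0"
          using od X homE[of i j] homE[of j i] pp unfolding one_dim_module_def B_def by auto
        have "sbracket B (EE i j :: 'k mat) 0 (EE j i) 0 = (\<lambda>a b. EE i i a b + (-1) * EE j j a b)"
          by (simp add: sbracket_def mm1 mm2)
        then have "mu i + (-1) * mu j = 0" using br wD[OF hw iB jB ij, of "-1"] by (simp only:)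
        moreover have "rho_tilde R len off sg i = rho_tilde R len off sg j + 1"
          using rho_adj(1)[OF r1 True] by (simp add: i_def j_def)
        ultimately show ?thesis using True unfolding mu_def i_def j_def
          by (simp add: algebra_simps)
      next
        case False
        have pp: "(par sg i + par sg j) mod 2 = 1" "(par sg j + par sg i) mod 2 = 1"
          using False by (auto simp: par_def i_def j_def)
        have h1: "homog sg (EE i j :: 'k mat) 1" "homog sg (EE j i :: 'k mat) 1"
          using homE[of i j] homE[of j i] pp by simp_all
        have z: "chi (EE i j) = 0" "chi (EE j i) = 0"
          using od X h1 unfolding one_dim_module_def by auto
        have br: "chi (sbracket B (EE i j) 1 (EE j i) 1) = 0"
          using od X h1 z unfolding one_dim_module_def B_def by auto
        have "sbracket B (EE i j :: 'k mat) 1 (EE j i) 1 = (\<lambda>a b. EE i i a b + 1 * EE j j a b)"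
          by (simp add: sbracket_def mm1 mm2)
        then have "mu i + 1 * mu j = 0" using br wD[OF hw iB jB ij, of 1] by (simp only:)
        moreover have "rho_tilde R len off sg i + rho_tilde R len off sg j = -1"
          using rho_adj(2)[OF r1 False] by (simp add: i_def j_def)
        ultimately show ?thesis using False unfolding mu_def i_def j_def
          by (simp add: algebra_simps of_int_add[symmetric] del: of_int_add) (metis add.commute add_eq_0_iff)
      qed
    qed
  next
    assume cc: "column_connected R len off sg A"
    define sig where "sig = (\<lambda>b::nat\<times>nat. (of_int (sgn_row sg (fst b)) :: 'k))"
    have adj: "(\<lambda>b. sig b * mu b) (r, c) = (\<lambda>b. sig b * mu b) (Suc r, c)"
      if bi: "(r, c) \<in> boxes R len off" and bj: "(Suc r, c) \<in> boxes R len off" for r c :: nat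
    proof -
      have r1: "1 \<le> r" using bi by (simp add: boxes_def)
      show ?thesis
      proof (cases "sg r = sg (Suc r)")
        case True
        then have "A (r, c) = A (Suc r, c) + 1" using cc bi bj unfolding column_connected_def by auto
        then show ?thesis using rho_adj(1)[OF r1 True, of R len off c] True
          by (simp add: mu_def sig_def sgn_row_def algebra_simps)
      next
        case False
        then have "A (r, c) + A (Suc r, c) = -1" using cc bi bj unfolding column_connected_def by auto
        moreover have "of_int (rho_tilde R len off sg (r, c)) + of_int (rho_tilde R len off sg (Suc r, c)) = (-1::'k)"
          using rho_adj(2)[OF r1 False, of R len off c] by (metis of_int_add of_int_minus of_int_1)
        ultimately show ?thesis using False
          by (simp add: mu_def sig_def sgn_row_def algebra_simps)
      qed
    qed
    have colc: "sig b * mu b = sig d * mu d" if "b \<in> B" "d \<in> B" "snd b = snd d" for b d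
      using col_const2[OF p, of "\<lambda>b. sig b * mu b", OF adj] that unfolding B_def by blast
    have muS: "mu b = mu d" if "b \<in> B" "d \<in> B" "snd b = snd d" "par sg b = par sg d" for b d
      using colc[OF that(1-3)] that(4) by (auto simp: sig_def sgn_row_def par_def split: if_splits)
    have muD: "mu b = - mu d" if "b \<in> B" "d \<in> B" "snd b = snd d" "par sg b \<noteq> par sg d" for b d
      using colc[OF that(1-3)] that(4) by (auto simp: sig_def sgn_row_def par_def split: if_splits; metis minus_minus)
    define chi where "chi = (\<lambda>X::'k mat. \<Sum>b\<in>B. mu b * X b b)"
    have odd0: "chi X = 0" if "homog sg X 1" for X
    proof -
      have "X b b = 0" for b
      proof (rule ccontr)
        assume "X b b \<noteq> 0"
        then have "(par sg b + par sg b) mod 2 = 1" using that unfolding homog_def by blast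
        then show False by simp
      qed
      then show ?thesis by (simp add: chi_def)
    qed
    have brk: "chi (sbracket B X x Y y) = chi X * chi Y - (-1) ^ (x * y) * chi Y * chi X"
      if X: "in_h R len off X" and Y: "in_h R len off Y" and hX: "homog sg X x" and hY: "homog sg Y y"
      for X x Y y
    proof -
      have xy: "x \<in> {0,1}" "y \<in> {0,1}" using hX hY by (auto simp: homog_def)
      have rhs: "chi X * chi Y - (-1) ^ (x * y) * chi Y * chi X = 0"
        using xy odd0 hX hY by auto
      define s where "s = ((-1) ^ (x * y) :: 'k)"
      have "chi (sbracket B X x Y y) =
          (\<Sum>b\<in>B. \<Sum>d\<in>B. mu b * X b d * Y d b) - s * (\<Sum>b\<in>B. \<Sum>d\<in>B. mu b * Y b d * X d b)"
        unfolding chi_def sbracket_def mat_mult_def s_def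
        by (simp add: right_diff_distrib sum_subtractf sum_distrib_left mult_ac)
      also have "(\<Sum>b\<in>B. \<Sum>d\<in>B. mu b * Y b d * X d b) = (\<Sum>b\<in>B. \<Sum>d\<in>B. mu d * X b d * Y d b)"
        by (subst sum.swap) (simp add: mult_ac)
      also have "(\<Sum>b\<in>B. \<Sum>d\<in>B. mu b * X b d * Y d b) - s * (\<Sum>b\<in>B. \<Sum>d\<in>B. mu d * X b d * Y d b)
          = (\<Sum>b\<in>B. \<Sum>d\<in>B. (mu b - s * mu d) * X b d * Y d b)"
        by (simp add: sum_distrib_left sum_subtractf[symmetric] algebra_simps)
      also have "\<dots> = 0"
      proof (intro sum.neutral ballI)
        fix b d assume bB: "b \<in> B" and dB: "d \<in> B"
        show "(mu b - s * mu d) * X b d * Y d b = 0"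
        proof (cases "X b d = 0 \<or> Y d b = 0")
          case True then show ?thesis by auto
        next
          case False
          then have nz: "X b d \<noteq> 0" "Y d b \<noteq> 0" by auto
          have sc: "snd b = snd d" using X nz(1) unfolding in_h_def by blast
          have px: "(par sg b + par sg d) mod 2 = x" using conjunct2[OF hX[unfolded homog_def]] nz(1) by blast
          have py: "(par sg d + par sg b) mod 2 = y" using conjunct2[OF hY[unfolded homog_def]] nz(2) by blast
          have pb: "par sg b \<in> {0,1}" "par sg d \<in> {0,1}" by (auto simp: par_def)
          show ?thesis
          proof (cases "par sg b = par sg d")
            case True
            then have "x = 0" using px by auto
            then have "s = 1" by (simp add: s_def)
            then show ?thesis using muS[OF bB dB sc True] by simp
          next
            case False
            then have "x = 1" "y = 1" using px py pb by auto
            then have "s = -1" by (simp add: s_def)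
            then show ?thesis using muD[OF bB dB sc False] by simp
          qed
        qed
      qed
      finally show ?thesis using rhs by simp
    qed
    have "one_dim_module R len off sg chi"
      unfolding one_dim_module_def
    proof (intro conjI allI impI)
      fix X Y :: "'k mat"
      show "chi (\<lambda>i j. X i j + Y i j) = chi X + chi Y"
        by (simp add: chi_def distrib_left sum.distrib)
    next
      fix a and X :: "'k mat"
      show "chi (\<lambda>i j. a * X i j) = a * chi X"
        by (simp add: chi_def sum_distrib_left mult_ac)
    next
      fix X :: "'k mat" assume "homog sg X 1" then show "chi X = 0" by (rule odd0)
    next
      fix X Y :: "'k mat" and x y
      assume "in_h R len off X" "in_h R len off Y" "homog sg X x" "homog sg Y y"
      then show "chi (sbracket (boxes R len off) X x Y y) = chi X * chi Y - (-1) ^ (x * y) * chi Y * chi X"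
        using brk unfolding B_def by blast
    qed
    moreover have "has_weight R len off chi (\<lambda>b. A b - of_int (rho_tilde R len off sg b))"
      unfolding has_weight_def chi_def mu_def B_def by simp
    ultimately show "\<exists>chi. one_dim_module R len off sg chi \<and> has_weight R len off chi (\<lambda>b. A b - of_int (rho_tilde R len off sg b))"
      by blast
  qed
qed

end
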